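(* Let $I,J\subset\mathbb{R}$ be intervals, $f:I\times J\to I$, $f_\lambda(x)=f(x,\lambda)$, $\lambda_0\in J$, $f_0=f_{\lambda_0}$. Assume: (H1) $f$ is a $C^1$ family of $C^2$ interval maps; (H2) $f_0$ is not constant on any interval; (H3) $f_0$ has at most one of: (a) a non-hyperbolic fixed point or periodic orbit, which as $\lambda$ varies is a generic codimension-one period-doubling or saddle-node bifurcation; (b) one critical point which constitutes a tangency between stable and unstable manifolds of fixed points or periodic orbits, generic in that as $\lambda$ varies through $\lambda_0$ the critical point moves from one side of the periodic point to the other; (H4) for each $\lambda$, $x_\lambda$ is a repelling fixed point of $f_\lambda$, $x_0:=x_{\lambda_0}$, and $y$ is a homoclinic point to $x_0$ for $f_0$; (H5) the homoclinic orbit containing $y$ at $\lambda_0$ contains only one critical point of $f_0$; (H6) $w$ is a homoclinic tangency point to $x_0$ for $f_0$ contained in at least one homoclinic orbit $(z_{-k})_{k\ge0}$, with $w=z_{-L}$. If $(w,\lambda_0)$ is a chain explosion point, then for every $k\ge L$ (i.e. every preimage $z_{-k}$ of $w$ in this homoclinic orbit), $(z_{-k},\lambda_0)$ is a chain explosion point.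
   Context: An $\epsilon$-chain for $g$ from $x$ to $y$: $z_0=x,\dots,z_N=y$ with $|g(z_{n-1})-z_n|<\epsilon$; $x$ is chain recurrent if for every $\epsilon>0$ there is such a chain from $x$ to itself with $N>0$. $(x,\lambda_0)$ is a chain explosion point if $x$ is chain recurrent for $f_{\lambda_0}$ but some neighborhood of $x$ contains no chain recurrent point of $f_\lambda$ for all $\lambda$ on one side of $\lambda_0$. For a repelling fixed point $x_0$, $y$ is homoclinic to $x_0$ if $y$ lies in the unstable manifold of $x_0$ and $f_0^K(y)=x_0$ for some $K>0$. A homoclinic orbit is a sequence $(z_{-k})_{k\ge0}$ with $z_0=x_0$, $z_{-K}=y$ for some $K$, $f_0(z_{-k})=z_{-k+1}$, $z_{-k}\to x_0$; $w=z_{-L}$ is a homoclinic tangency point if the graph of $f_0$ has a horizontal tangent at $w$. *)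

theory Defs
  imports "HOL-Analysis.Analysis"
begin

definition slice :: "(real \<Rightarrow> real \<Rightarrow> real) \<Rightarrow> real \<Rightarrow> real \<Rightarrow> real" where
  "slice f l = (\<lambda>x. f x l)"

text \<open>(H1): C1 family of C2 interval maps.  D1, D2 are the first and second x-derivatives,
  Dl the lambda-derivative; the family is C1 in (x,lambda) (continuous partials), each map is C2.\<close>
definition C1_family_C2 ::
  "real set \<Rightarrow> real set \<Rightarrow> (real \<Rightarrow> real \<Rightarrow> real) \<Rightarrow> (real \<Rightarrow> real \<Rightarrow> real) \<Rightarrow>
   (real \<Rightarrow> real \<Rightarrow> real) \<Rightarrow> (real \<Rightarrow> real \<Rightarrow> real) \<Rightarrow> bool" where
  "C1_family_C2 I J f D1 D2 Dl \<longleftrightarrow>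
     (\<forall>x\<in>I. \<forall>l\<in>J.
        ((\<lambda>y. f y l) has_real_derivative D1 x l) (at x within I) \<and>
        ((\<lambda>y. D1 y l) has_real_derivative D2 x l) (at x within I) \<and>
        ((\<lambda>m. f x m) has_real_derivative Dl x l) (at l within J)) \<and>
     continuous_on (I \<times> J) (\<lambda>(x, l). D1 x l) \<and>
     continuous_on (I \<times> J) (\<lambda>(x, l). Dl x l) \<and>
     (\<forall>l\<in>J. continuous_on I (\<lambda>x. D2 x l))"

definition not_const_on_intervals :: "(real \<Rightarrow> real) \<Rightarrow> real set \<Rightarrow> bool" where
  "not_const_on_intervals g I \<longleftrightarrow>
     (\<forall>a b. a < b \<and> {a..b} \<subseteq> I \<longrightarrow> \<not> (\<forall>x\<in>{a..b}. g x = g a))"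

definition min_period :: "(real \<Rightarrow> real) \<Rightarrow> real \<Rightarrow> nat \<Rightarrow> bool" where
  "min_period g p n \<longleftrightarrow> 0 < n \<and> (g ^^ n) p = p \<and> (\<forall>m. 0 < m \<and> m < n \<longrightarrow> (g ^^ m) p \<noteq> p)"

definition orbit :: "(real \<Rightarrow> real) \<Rightarrow> real \<Rightarrow> nat \<Rightarrow> real set" where
  "orbit g p n = {(g ^^ i) p | i. i < n}"

text \<open>Derivative of f_l^n at p (chain rule).\<close>
definition multiplier :: "(real \<Rightarrow> real \<Rightarrow> real) \<Rightarrow> (real \<Rightarrow> real \<Rightarrow> real) \<Rightarrow> real \<Rightarrow> nat \<Rightarrow> real \<Rightarrow> real" where
  "multiplier f D1 l n p = (\<Prod>i<n. D1 ((slice f l ^^ i) p) l)"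

definition nonhyp_pts :: "real set \<Rightarrow> (real \<Rightarrow> real \<Rightarrow> real) \<Rightarrow> (real \<Rightarrow> real \<Rightarrow> real) \<Rightarrow> real \<Rightarrow> real set" where
  "nonhyp_pts I f D1 l = {p \<in> I. \<exists>n. min_period (slice f l) p n \<and> \<bar>multiplier f D1 l n p\<bar> = 1}"

definition unstable_set :: "(real \<Rightarrow> real) \<Rightarrow> real set \<Rightarrow> real set \<Rightarrow> real set" where
  "unstable_set g I Orb = {y. \<exists>z::nat \<Rightarrow> real. z 0 = y \<and> (\<forall>k. z k \<in> I \<and> g (z (Suc k)) = z k) \<and>
                              (\<lambda>k. infdist (z k) Orb) \<longlonglongrightarrow> 0}"

text \<open>Critical points of f_l which are tangencies of the unstable manifold of one periodic orbit
  with the stable manifold (preimages) of another.\<close>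
definition tangency_pts :: "real set \<Rightarrow> (real \<Rightarrow> real \<Rightarrow> real) \<Rightarrow> (real \<Rightarrow> real \<Rightarrow> real) \<Rightarrow> real \<Rightarrow> real set" where
  "tangency_pts I f D1 l = {c \<in> I. D1 c l = 0 \<and>
      (\<exists>p1 n1 p2 n2 m. p1 \<in> I \<and> min_period (slice f l) p1 n1 \<and> p2 \<in> I \<and> min_period (slice f l) p2 n2 \<and>
          c \<in> unstable_set (slice f l) I (orbit (slice f l) p1 n1) \<and> (slice f l ^^ m) c = p2)}"

text \<open>Generic saddle-node at p of period n: multiplier 1, nonzero second x-derivative of f^n,
  nonzero lambda-derivative of f^n.\<close>
definition generic_saddle_node ::
  "real set \<Rightarrow> real set \<Rightarrow> (real \<Rightarrow> real \<Rightarrow> real) \<Rightarrow> (real \<Rightarrow> real \<Rightarrow> real) \<Rightarrow> real \<Rightarrow> real \<Rightarrow> nat \<Rightarrow> bool" where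
  "generic_saddle_node I J f D1 l0 p n \<longleftrightarrow>
     multiplier f D1 l0 n p = 1 \<and>
     (\<exists>s. s \<noteq> 0 \<and> ((\<lambda>x. multiplier f D1 l0 n x) has_real_derivative s) (at p within I)) \<and>
     (\<exists>t. t \<noteq> 0 \<and> ((\<lambda>l. (slice f l ^^ n) p) has_real_derivative t) (at l0 within J))"

definition generic_period_doubling ::
  "real set \<Rightarrow> real set \<Rightarrow> (real \<Rightarrow> real \<Rightarrow> real) \<Rightarrow> (real \<Rightarrow> real \<Rightarrow> real) \<Rightarrow> real \<Rightarrow> real \<Rightarrow> nat \<Rightarrow> bool" where
  "generic_period_doubling I J f D1 l0 p n \<longleftrightarrow>
     multiplier f D1 l0 n p = -1 \<and>
     (\<exists>P :: real \<Rightarrow> real. \<exists>\<delta>>0. P l0 = p \<and> continuous (at l0) P \<and>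
        (\<forall>l. \<bar>l - l0\<bar> < \<delta> \<longrightarrow> l \<in> J \<and> P l \<in> I \<and> (slice f l ^^ n) (P l) = P l) \<and>
        (\<exists>r. r \<noteq> 0 \<and> ((\<lambda>l. multiplier f D1 l n (P l)) has_real_derivative r) (at l0)))"

definition generic_tangency ::
  "real set \<Rightarrow> real set \<Rightarrow> (real \<Rightarrow> real \<Rightarrow> real) \<Rightarrow> (real \<Rightarrow> real \<Rightarrow> real) \<Rightarrow> real \<Rightarrow> real \<Rightarrow> bool" where
  "generic_tangency I J f D1 l0 c \<longleftrightarrow>
     (\<exists>p1 n1 q n m. p1 \<in> I \<and> min_period (slice f l0) p1 n1 \<and> q \<in> I \<and> min_period (slice f l0) q n \<and>
        c \<in> unstable_set (slice f l0) I (orbit (slice f l0) p1 n1) \<and> (slice f l0 ^^ m) c = q \<and>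
        (\<exists>C Q :: real \<Rightarrow> real. \<exists>\<delta>>0. \<exists>s::real. (s = 1 \<or> s = -1) \<and>
           C l0 = c \<and> Q l0 = q \<and> continuous (at l0) C \<and> continuous (at l0) Q \<and>
           (\<forall>l. \<bar>l - l0\<bar> < \<delta> \<longrightarrow> l \<in> J \<and> C l \<in> I \<and> D1 (C l) l = 0 \<and> Q l \<in> I \<and>
                 (slice f l ^^ n) (Q l) = Q l) \<and>
           (\<forall>l. l0 - \<delta> < l \<and> l < l0 \<longrightarrow> s * ((slice f l ^^ m) (C l) - Q l) < 0) \<and>
           (\<forall>l. l0 < l \<and> l < l0 + \<delta> \<longrightarrow> s * ((slice f l ^^ m) (C l) - Q l) > 0)))"

definition H3 :: "real set \<Rightarrow> real set \<Rightarrow> (real \<Rightarrow> real \<Rightarrow> real) \<Rightarrow> (real \<Rightarrow> real \<Rightarrow> real) \<Rightarrow> real \<Rightarrow> bool" where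
  "H3 I J f D1 l0 \<longleftrightarrow>
     (nonhyp_pts I f D1 l0 = {} \<and> tangency_pts I f D1 l0 = {}) \<or>
     (tangency_pts I f D1 l0 = {} \<and>
        (\<exists>p n. p \<in> I \<and> min_period (slice f l0) p n \<and> nonhyp_pts I f D1 l0 = orbit (slice f l0) p n \<and>
           (generic_saddle_node I J f D1 l0 p n \<or> generic_period_doubling I J f D1 l0 p n))) \<or>
     (nonhyp_pts I f D1 l0 = {} \<and> (\<exists>c. tangency_pts I f D1 l0 = {c} \<and> generic_tangency I J f D1 l0 c))"

definition homoclinic_point :: "(real \<Rightarrow> real) \<Rightarrow> real set \<Rightarrow> real \<Rightarrow> real \<Rightarrow> bool" where
  "homoclinic_point g I x0 y \<longleftrightarrow> y \<in> unstable_set g I {x0} \<and> (\<exists>K>0. (g ^^ K) y = x0)"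

text \<open>A homoclinic orbit (z_{-k})_{k>=0} is represented by z k = z_{-k}.\<close>
definition homoclinic_orbit :: "(real \<Rightarrow> real) \<Rightarrow> real set \<Rightarrow> real \<Rightarrow> (nat \<Rightarrow> real) \<Rightarrow> bool" where
  "homoclinic_orbit g I x0 z \<longleftrightarrow> z 0 = x0 \<and> (\<forall>k. z k \<in> I \<and> g (z (Suc k)) = z k) \<and> z \<longlonglongrightarrow> x0"

definition eps_chain :: "(real \<Rightarrow> real) \<Rightarrow> real set \<Rightarrow> real \<Rightarrow> real \<Rightarrow> real \<Rightarrow> nat \<Rightarrow> bool" where
  "eps_chain g I \<epsilon> x y N \<longleftrightarrow>
     (\<exists>z::nat \<Rightarrow> real. z 0 = x \<and> z N = y \<and> (\<forall>i\<le>N. z i \<in> I) \<and> (\<forall>i<N. \<bar>g (z i) - z (Suc i)\<bar> < \<epsilon>))"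

definition chain_recurrent :: "(real \<Rightarrow> real) \<Rightarrow> real set \<Rightarrow> real \<Rightarrow> bool" where
  "chain_recurrent g I x \<longleftrightarrow> x \<in> I \<and> (\<forall>\<epsilon>>0. \<exists>N>0. eps_chain g I \<epsilon> x x N)"

definition chain_explosion :: "real set \<Rightarrow> real set \<Rightarrow> (real \<Rightarrow> real \<Rightarrow> real) \<Rightarrow> real \<Rightarrow> real \<Rightarrow> bool" where
  "chain_explosion I J f x l0 \<longleftrightarrow> l0 \<in> J \<and> chain_recurrent (slice f l0) I x \<and>
     (\<exists>r>0. \<exists>\<delta>>0.
        (\<forall>l\<in>J. l0 < l \<and> l < l0 + \<delta> \<longrightarrow> (\<forall>u\<in>ball x r. \<not> chain_recurrent (slice f l) I u)) \<or>
        (\<forall>l\<in>J. l0 - \<delta> < l \<and> l < l0 \<longrightarrow> (\<forall>u\<in>ball x r. \<not> chain_recurrent (slice f l) I u)))"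

end

theory Submission
  imports Defs
begin

lemma f_cont:
  assumes intI: "is_interval I" and H1: "C1_family_C2 I J f D1 D2 Dl"
    and u0: "u0 \<in> I" and l0: "l0 \<in> J" and e: "e > 0"
  shows "\<exists>d>0. \<forall>u\<in>I. \<forall>l\<in>J. \<bar>u - u0\<bar> < d \<longrightarrow> \<bar>l - l0\<bar> < d \<longrightarrow> \<bar>f u l - f u0 l0\<bar> < e"
proof -
  have der: "\<And>x l. x \<in> I \<Longrightarrow> l \<in> J \<Longrightarrow> ((\<lambda>y. f y l) has_real_derivative D1 x l) (at x within I)"
    and derl: "((\<lambda>m. f u0 m) has_real_derivative Dl u0 l0) (at l0 within J)"
    and cD1: "continuous_on (I \<times> J) (\<lambda>(x, l). D1 x l)"
    using H1 u0 l0 unfolding C1_family_C2_def by auto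
  obtain d1 where d1: "d1 > 0" and
     hd1: "\<forall>p\<in>I \<times> J. dist p (u0, l0) < d1 \<longrightarrow> dist ((\<lambda>(x, l). D1 x l) p) ((\<lambda>(x, l). D1 x l) (u0,l0)) < 1"
    using cD1 u0 l0 unfolding continuous_on_iff by (metis SigmaI zero_less_one)
  define B where "B = \<bar>D1 u0 l0\<bar> + 1"
  have B: "B > 0" unfolding B_def by simp
  have "continuous (at l0 within J) (\<lambda>m. f u0 m)"
    using derl real_differentiable_def differentiable_imp_continuous_within by blast
  then obtain d2 where d2: "d2 > 0" and hd2: "\<forall>l\<in>J. dist l l0 < d2 \<longrightarrow> dist (f u0 l) (f u0 l0) < e/2"
    unfolding continuous_within_eps_delta using e by (meson half_gt_zero)
  define d where "d = min (d1/2) (min d2 (e/(2*B)))"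
  have "d > 0" unfolding d_def using d1 d2 e B by simp
  moreover have "\<bar>f u l - f u0 l0\<bar> < e" if u: "u \<in> I" and l: "l \<in> J" and hu: "\<bar>u - u0\<bar> < d" and hl: "\<bar>l - l0\<bar> < d" for u l
  proof -
    define S where "S = I \<inter> ball u0 (d1/2)"
    have cS: "convex S" unfolding S_def
      by (simp add: convex_Int intI is_interval_convex)
    have dS: "((\<lambda>y. f y l) has_field_derivative D1 x l) (at x within S)" if "x \<in> S" for x
      using der[of x l] that l unfolding S_def by (meson IntD1 has_field_derivative_subset inf_le1)
    have bS: "norm (D1 x l) \<le> B" if "x \<in> S" for x
    proof -
      have xI: "x \<in> I" and xb: "\<bar>x - u0\<bar> < d1/2" using that unfolding S_def by (auto simp: dist_real_def abs_minus_commute)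
      have "dist (x, l) (u0, l0) \<le> \<bar>x - u0\<bar> + \<bar>l - l0\<bar>"
        unfolding dist_Pair_Pair dist_real_def using sqrt_sum_squares_le_sum_abs[of "x-u0" "l-l0"] by simp
      also have "\<dots> < d1" using xb hl unfolding d_def by linarith
      finally have "dist (D1 x l) (D1 u0 l0) < 1" using hd1 xI l by auto
      then show ?thesis unfolding B_def dist_real_def by simp
    qed
    have "\<bar>u - u0\<bar> < d1/2" using hu unfolding d_def by linarith
    then have "dist u0 u < d1/2" by (metis dist_commute dist_real_def)
    then have "u \<in> S" "u0 \<in> S" using u u0 d1 unfolding S_def by auto
    from field_differentiable_bound[OF cS dS bS this]
    have "\<bar>f u l - f u0 l\<bar> \<le> B * \<bar>u - u0\<bar>" by simp
    also have "\<dots> \<le> B * d" using hu B by simp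
    also have "\<dots> \<le> B * (e/(2*B))" using B unfolding d_def by (intro mult_left_mono) auto
    also have "\<dots> = e/2" using B by simp
    finally have 1: "\<bar>f u l - f u0 l\<bar> \<le> e/2" .
    have "\<bar>f u0 l - f u0 l0\<bar> < e/2" using hd2 l hl unfolding d_def dist_real_def by auto
    with 1 show ?thesis by linarith
  qed
  ultimately show ?thesis by blast
qed

lemma iter_in:
  assumes maps: "\<forall>x\<in>I. \<forall>l\<in>J. f x l \<in> I" and "u \<in> I" "l \<in> J"
  shows "(slice f l ^^ m) u \<in> I"
  using assms by (induction m) (auto simp: slice_def)

lemma iter_cont:
  assumes intI: "is_interval I" and H1: "C1_family_C2 I J f D1 D2 Dl"
    and maps: "\<forall>x\<in>I. \<forall>l\<in>J. f x l \<in> I"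
    and u0: "u0 \<in> I" and l0: "l0 \<in> J"
  shows "\<forall>e>0. \<exists>d>0. \<forall>u\<in>I. \<forall>l\<in>J. \<bar>u - u0\<bar> < d \<longrightarrow> \<bar>l - l0\<bar> < d \<longrightarrow>
           \<bar>(slice f l ^^ m) u - (slice f l0 ^^ m) u0\<bar> < e"
proof (induction m)
  case 0
  then show ?case by auto
next
  case (Suc m)
  show ?case
  proof (intro allI impI)
    fix e :: real assume e: "e > 0"
    define v0 where "v0 = (slice f l0 ^^ m) u0"
    have v0: "v0 \<in> I" unfolding v0_def using iter_in[OF maps u0 l0] .
    obtain d' where d': "d' > 0" and hd': "\<forall>u\<in>I. \<forall>l\<in>J. \<bar>u - v0\<bar> < d' \<longrightarrow> \<bar>l - l0\<bar> < d' \<longrightarrow> \<bar>f u l - f v0 l0\<bar> < e"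
      using f_cont[OF intI H1 v0 l0 e] by blast
    obtain d'' where d'': "d'' > 0" and hd'': "\<forall>u\<in>I. \<forall>l\<in>J. \<bar>u - u0\<bar> < d'' \<longrightarrow> \<bar>l - l0\<bar> < d'' \<longrightarrow>
           \<bar>(slice f l ^^ m) u - v0\<bar> < d'"
      using Suc d' unfolding v0_def by blast
    show "\<exists>d>0. \<forall>u\<in>I. \<forall>l\<in>J. \<bar>u - u0\<bar> < d \<longrightarrow> \<bar>l - l0\<bar> < d \<longrightarrow>
           \<bar>(slice f l ^^ Suc m) u - (slice f l0 ^^ Suc m) u0\<bar> < e"
    proof (intro exI[of _ "min d' d''"] conjI ballI impI)
      show "min d' d'' > 0" using d' d'' by simp
      fix u l assume u: "u \<in> I" and l: "l \<in> J" and hu: "\<bar>u - u0\<bar> < min d' d''" and hl: "\<bar>l - l0\<bar> < min d' d''"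
      have "\<bar>(slice f l ^^ m) u - v0\<bar> < d'" using hd'' u l hu hl by auto
      moreover have "(slice f l ^^ m) u \<in> I" using iter_in[OF maps u l] .
      ultimately have "\<bar>f ((slice f l ^^ m) u) l - f v0 l0\<bar> < e" using hd' l hl by auto
      then show "\<bar>(slice f l ^^ Suc m) u - (slice f l0 ^^ Suc m) u0\<bar> < e"
        unfolding v0_def by (simp add: slice_def)
    qed
  qed
qed

lemma cr_image:
  assumes intI: "is_interval I" and H1: "C1_family_C2 I J f D1 D2 Dl"
    and maps: "\<forall>x\<in>I. \<forall>l\<in>J. f x l \<in> I" and l: "l \<in> J"
    and cr: "chain_recurrent (slice f l) I u"
  shows "chain_recurrent (slice f l) I (f u l)"
proof -
  have uI: "u \<in> I" using cr unfolding chain_recurrent_def by auto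
  have fuI: "f u l \<in> I" using maps uI l by auto
  have "\<exists>N>0. eps_chain (slice f l) I \<epsilon> (f u l) (f u l) N" if \<epsilon>: "\<epsilon> > 0" for \<epsilon>
  proof -
    have e2: "\<epsilon>/2 > 0" using \<epsilon> by simp
    obtain d where d: "d > 0" and hd: "\<forall>y\<in>I. \<forall>l'\<in>J. \<bar>y - f u l\<bar> < d \<longrightarrow> \<bar>l' - l\<bar> < d \<longrightarrow> \<bar>f y l' - f (f u l) l\<bar> < \<epsilon>/2"
      using f_cont[OF intI H1 fuI l e2] by blast
    obtain d0 where d0: "d0 > 0" and hd0: "\<forall>y\<in>I. \<forall>l'\<in>J. \<bar>y - u\<bar> < d0 \<longrightarrow> \<bar>l' - l\<bar> < d0 \<longrightarrow> \<bar>f y l' - f u l\<bar> < \<epsilon>/2"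
      using f_cont[OF intI H1 uI l e2] by blast
    define \<delta> where "\<delta> = min d (min d0 (\<epsilon>/2))"
    have "\<delta> > 0" unfolding \<delta>_def using d d0 \<epsilon> by simp
    then obtain N where N: "N > 0" and "eps_chain (slice f l) I \<delta> u u N"
      using cr unfolding chain_recurrent_def by blast
    then obtain c where c0: "c 0 = u" and cN: "c N = u" and cI: "\<forall>i\<le>N. c i \<in> I"
      and cs: "\<forall>i<N. \<bar>f (c i) l - c (Suc i)\<bar> < \<delta>"
      unfolding eps_chain_def slice_def by blast
    define y where "y i = (if i = 0 \<or> i = N then f u l else c (Suc i))" for i
    have "eps_chain (slice f l) I \<epsilon> (f u l) (f u l) N"
      unfolding eps_chain_def slice_def
    proof (intro exI[of _ y] conjI allI impI)
      show "y 0 = f u l" "y N = f u l" unfolding y_def by auto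
      fix i assume "i \<le> N" then show "y i \<in> I" unfolding y_def using fuI cI
        by (auto simp: Suc_le_eq)
    next
      fix i assume i: "i < N"
      show "\<bar>f (y i) l - y (Suc i)\<bar> < \<epsilon>"
      proof (cases "i = 0")
        case True
        have c1: "\<bar>f u l - c 1\<bar> < \<delta>" using cs N c0 by auto
        have c1I: "c 1 \<in> I" using cI N by auto
        show ?thesis
        proof (cases "N = 1")
          case True
          then have "c 1 = u" using cN by simp
          then have "\<bar>f u l - u\<bar> < d0" using c1 unfolding \<delta>_def by auto
          then have "\<bar>f (f u l) l - f u l\<bar> < \<epsilon>/2" using hd0 fuI l by (auto simp: abs_minus_commute)
          then have "\<bar>f (f u l) l - f u l\<bar> < \<epsilon>" using abs_ge_zero[of "f (f u l) l - f u l"] by linarith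
          then show ?thesis using \<open>i = 0\<close> True unfolding y_def by auto
        next
          case False
          then have N2: "1 < N" using N by simp
          have "\<bar>c 1 - f u l\<bar> < d" using c1 unfolding \<delta>_def by auto
          then have a: "\<bar>f (c 1) l - f (f u l) l\<bar> < \<epsilon>/2" using hd c1I l by auto
          have b: "\<bar>f (c 1) l - c 2\<bar> < \<epsilon>/2" using cs N2 unfolding \<delta>_def
            by (metis min_less_iff_conj numeral_2_eq_2 One_nat_def)
          have "y (Suc i) = c 2" using \<open>i = 0\<close> N2 unfolding y_def by (simp add: numeral_2_eq_2)
          moreover have "\<bar>f (f u l) l - c 2\<bar> < \<epsilon>" using a b by arith
          ultimately show ?thesis using \<open>i = 0\<close> unfolding y_def by auto
        qed
      next
        case False
        show ?thesis
        proof (cases "Suc i = N")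
          case True
          then show ?thesis using False cN \<epsilon> unfolding y_def by auto
        next
          case False2: False
          have "\<bar>f (c (Suc i)) l - c (Suc (Suc i))\<bar> < \<delta>" using cs i False2 by auto
          moreover have "\<delta> < \<epsilon>" unfolding \<delta>_def using \<epsilon> by linarith
          ultimately have "\<bar>f (c (Suc i)) l - c (Suc (Suc i))\<bar> < \<epsilon>" by linarith
          then show ?thesis using False False2 i unfolding y_def by auto
        qed
      qed
    qed
    then show ?thesis using N by blast
  qed
  then show ?thesis unfolding chain_recurrent_def using fuI by blast
qed

lemma cr_iter:
  assumes intI: "is_interval I" and H1: "C1_family_C2 I J f D1 D2 Dl"
    and maps: "\<forall>x\<in>I. \<forall>l\<in>J. f x l \<in> I" and l: "l \<in> J"
    and cr: "chain_recurrent (slice f l) I u"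
  shows "chain_recurrent (slice f l) I ((slice f l ^^ m) u)"
  using cr
proof (induction m)
  case 0 then show ?case by simp
next
  case (Suc m)
  then show ?case using cr_image[OF intI H1 maps l, of "(slice f l ^^ m) u"] by (simp add: slice_def)
qed

lemma orbit_back:
  assumes "\<forall>k. g (z (Suc k)) = z k"
  shows "(g ^^ j) (z (i + j)) = z i"
proof (induction j)
  case 0 then show ?case by simp
next
  case (Suc j)
  have "(g ^^ Suc j) (z (i + Suc j)) = (g ^^ j) (g (z (Suc (i + j))))"
    by (simp add: funpow_Suc_right del: funpow.simps)
  also have "\<dots> = z i" using assms Suc by simp
  finally show ?case .
qed

theorem mainTheorem9:
  fixes I J :: "real set" and f D1 D2 Dl :: "real \<Rightarrow> real \<Rightarrow> real"
    and l0 y w :: real and xs :: "real \<Rightarrow> real" and z :: "nat \<Rightarrow> real" and L :: nat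
  assumes intI: "is_interval I" and neI: "interior I \<noteq> {}"
    and intJ: "is_interval J" and l0J: "l0 \<in> interior J"
    and maps: "\<forall>x\<in>I. \<forall>l\<in>J. f x l \<in> I"
    and H1: "C1_family_C2 I J f D1 D2 Dl"
    and H2: "not_const_on_intervals (slice f l0) I"
    and H3: "H3 I J f D1 l0"
    and H4a: "\<forall>l\<in>J. xs l \<in> I \<and> f (xs l) l = xs l \<and> \<bar>D1 (xs l) l\<bar> > 1"
    and H4b: "homoclinic_point (slice f l0) I (xs l0) y"
    and H5: "\<exists>zy K. homoclinic_orbit (slice f l0) I (xs l0) zy \<and> zy K = y \<and>
               card (range zy \<inter> {c \<in> I. D1 c l0 = 0}) = 1"
    and H6: "homoclinic_orbit (slice f l0) I (xs l0) z" "w = z L" "D1 w l0 = 0"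
    and expl: "chain_explosion I J f w l0"
  shows "\<forall>k\<ge>L. chain_explosion I J f (z k) l0"
proof (intro allI impI)
  fix k assume kL: "k \<ge> L"
  have l0: "l0 \<in> J" using l0J interior_subset by blast
  have z0: "z 0 = xs l0" and zI: "\<And>k. z k \<in> I" and zs: "\<forall>k. f (z (Suc k)) l0 = z k"
    and zlim: "z \<longlonglongrightarrow> xs l0"
    using H6(1) unfolding homoclinic_orbit_def slice_def by auto
  have fx0: "f (xs l0) l0 = xs l0" using H4a l0 by auto
  define m where "m = k - L"
  have "(slice f l0 ^^ m) (z (L + m)) = z L"
    by (rule orbit_back) (use zs in \<open>simp add: slice_def\<close>)
  then have wk: "(slice f l0 ^^ m) (z k) = w" using kL H6(2) unfolding m_def by simp
  have crk: "chain_recurrent (slice f l0) I (z k)"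
    unfolding chain_recurrent_def
  proof (intro conjI allI impI)
    show "z k \<in> I" using zI .
    fix \<epsilon> :: real assume \<epsilon>: "\<epsilon> > 0"
    obtain j0 where j0: "\<forall>j\<ge>j0. norm (z j - xs l0) < \<epsilon>" using zlim \<epsilon> unfolding LIMSEQ_iff by blast
    define j where "j = max j0 k"
    have jk: "j \<ge> k" and zj: "\<bar>z j - xs l0\<bar> < \<epsilon>" using j0 unfolding j_def by auto
    define c where "c i = (if i \<le> k then z (k - i) else z (j + k + 1 - i))" for i
    have "eps_chain (slice f l0) I \<epsilon> (z k) (z k) (Suc j)"
      unfolding eps_chain_def slice_def
    proof (intro exI[of _ c] conjI allI impI)
      show "c 0 = z k" unfolding c_def by simp
      show "c (Suc j) = z k" unfolding c_def using jk by auto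
      fix i show "c i \<in> I" unfolding c_def using zI by auto
    next
      fix i assume i: "i < Suc j"
      show "\<bar>f (c i) l0 - c (Suc i)\<bar> < \<epsilon>"
      proof (cases "i < k")
        case True
        then have "c i = z (Suc (k - Suc i))" "c (Suc i) = z (k - Suc i)" unfolding c_def
          by (auto simp: Suc_diff_Suc)
        then show ?thesis using zs \<epsilon> by simp
      next
        case False
        show ?thesis
        proof (cases "i = k")
          case True
          then have "c i = xs l0" "c (Suc i) = z j" unfolding c_def using z0 by auto
          then show ?thesis using fx0 zj by (simp add: abs_minus_commute)
        next
          case False2: False
          then have "c i = z (Suc (j + k - i))" "c (Suc i) = z (j + k - i)" unfolding c_def
            using False i by (auto simp: Suc_diff_le)
          then show ?thesis using zs \<epsilon> by simp
        qed
      qed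
    qed
    then show "\<exists>N>0. eps_chain (slice f l0) I \<epsilon> (z k) (z k) N" by blast
  qed
  obtain r \<delta> where r: "r > 0" and \<delta>: "\<delta> > 0" and
    side: "(\<forall>l\<in>J. l0 < l \<and> l < l0 + \<delta> \<longrightarrow> (\<forall>u\<in>ball w r. \<not> chain_recurrent (slice f l) I u)) \<or>
        (\<forall>l\<in>J. l0 - \<delta> < l \<and> l < l0 \<longrightarrow> (\<forall>u\<in>ball w r. \<not> chain_recurrent (slice f l) I u))"
    using expl unfolding chain_explosion_def by blast
  obtain d where d: "d > 0" and hd: "\<forall>u\<in>I. \<forall>l\<in>J. \<bar>u - z k\<bar> < d \<longrightarrow> \<bar>l - l0\<bar> < d \<longrightarrow>
           \<bar>(slice f l ^^ m) u - w\<bar> < r"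
    using iter_cont[OF intI H1 maps zI[of k] l0, of m, rule_format, OF r] unfolding wk by blast
  have key: "\<not> chain_recurrent (slice f l) I u"
    if l: "l \<in> J" and u: "u \<in> ball (z k) d" and hl: "\<bar>l - l0\<bar> < d"
      and nw: "\<forall>u\<in>ball w r. \<not> chain_recurrent (slice f l) I u" for l u
  proof
    assume cr: "chain_recurrent (slice f l) I u"
    then have uI: "u \<in> I" unfolding chain_recurrent_def by auto
    have "\<bar>(slice f l ^^ m) u - w\<bar> < r" using hd uI l hl u by (auto simp: dist_real_def abs_minus_commute)
    then have "(slice f l ^^ m) u \<in> ball w r" by (simp add: dist_real_def abs_minus_commute)
    moreover have "chain_recurrent (slice f l) I ((slice f l ^^ m) u)" using cr_iter[OF intI H1 maps l cr] .
    ultimately show False using nw by blast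
  qed
  have "\<exists>r>0. \<exists>\<delta>>0.
        (\<forall>l\<in>J. l0 < l \<and> l < l0 + \<delta> \<longrightarrow> (\<forall>u\<in>ball (z k) r. \<not> chain_recurrent (slice f l) I u)) \<or>
        (\<forall>l\<in>J. l0 - \<delta> < l \<and> l < l0 \<longrightarrow> (\<forall>u\<in>ball (z k) r. \<not> chain_recurrent (slice f l) I u))"
  proof -
    have P: "(\<forall>l\<in>J. l0 < l \<and> l < l0 + min \<delta> d \<longrightarrow> (\<forall>u\<in>ball (z k) d. \<not> chain_recurrent (slice f l) I u)) \<or>
        (\<forall>l\<in>J. l0 - min \<delta> d < l \<and> l < l0 \<longrightarrow> (\<forall>u\<in>ball (z k) d. \<not> chain_recurrent (slice f l) I u))"
      using side
    proof
      assume A: "\<forall>l\<in>J. l0 < l \<and> l < l0 + \<delta> \<longrightarrow> (\<forall>u\<in>ball w r. \<not> chain_recurrent (slice f l) I u)"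
      show ?thesis
      proof (rule disjI1, intro ballI impI)
        fix l u assume "l \<in> J" "l0 < l \<and> l < l0 + min \<delta> d" "u \<in> ball (z k) d"
        then show "\<not> chain_recurrent (slice f l) I u" using key A by auto
      qed
    next
      assume A: "\<forall>l\<in>J. l0 - \<delta> < l \<and> l < l0 \<longrightarrow> (\<forall>u\<in>ball w r. \<not> chain_recurrent (slice f l) I u)"
      show ?thesis
      proof (rule disjI2, intro ballI impI)
        fix l u assume "l \<in> J" "l0 - min \<delta> d < l \<and> l < l0" "u \<in> ball (z k) d"
        then show "\<not> chain_recurrent (slice f l) I u" using key A by auto
      qed
    qed
    have "min \<delta> d > 0" using d \<delta> by auto
    then show ?thesis using d P by blast
  qed
  then show "chain_explosion I J f (z k) l0"
    unfolding chain_explosion_def using l0 crk by blast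
qed

end
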